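(* Let $P=(\succ_1,\dots,\succ_n)$ and $P'=(\succ'_1,\dots,\succ'_n)$ be two preference profiles over the same set of agents $N$ and the same set of houses $H$. Then $G_P=G_{P'}$ (the two profiles induce the same majority graph) if and only if $P$ and $P'$ are rotation equivalent.
   Context: Let $n\ge 1$, let $N=\{1,\dots,n\}$ be a set of agents and $H$ a set of $n$ houses. A preference profile $P=(\succ_1,\dots,\succ_n)$ assigns to each agent $x\in N$ a strict linear order $\succ_x$ on $H$. An assignment is a bijection $\mu:N\to H$; $M$ denotes the set of all assignments. Agent $x$ weakly prefers $\mu$ to $\lambda$ if $\mu(x)\succ_x\lambda(x)$ or $\mu(x)=\lambda(x)$. Let $N_{\mu,\lambda}=\{x\in N: x \text{ weakly prefers } \mu \text{ to } \lambda\}$, and write $\mu\succsim\lambda$ if $|N_{\mu,\lambda}|\ge|N_{\lambda,\mu}|$. The majority graph of $P$ is the directed graph $G_P=(M,\{(\mu,\lambda)\in M^2:\mu\succsim\lambda\})$. An ordered partition $(H_1,\dots,H_k)$ of $H$ into nonempty sets is a decomposition of a profile $P$ if for all $1\le j<\ell\le k$, all $p\in H_j$, $q\in H_\ell$ and all $x\in N$ we have $p\succ_x q$. Two profiles $P,P'$ are rotation equivalent if there is a decomposition $(H_1,\dots,H_k)$ of $P$ such that (a) for every $j\le k$, all $p,q\in H_j$ and all $x\in N$: $p\succ_x q$ iff $p\succ'_x q$; and (b) there is $r\in\{0,\dots,k-1\}$ such that $(H_{1+r},\dots,H_{k+r})$ is a decomposition of $P'$, where indices are taken cyclically ($H_{j+r}:=H_{j+r-k}$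 if $j+r>k$). *)

theory Defs
  imports Main
begin

text \<open>A profile assigns to each agent x a strict linear order P x on H, given as a
  relation: (p, q) \<in> P x means p is strictly preferred to q by agent x.\<close>

definition agents :: "nat \<Rightarrow> nat set" where
  "agents n = {1..n}"

definition is_profile :: "nat \<Rightarrow> 'h set \<Rightarrow> (nat \<Rightarrow> ('h \<times> 'h) set) \<Rightarrow> bool" where
  "is_profile n H P \<longleftrightarrow>
     (\<forall>x\<in>agents n. P x \<subseteq> H \<times> H \<and> strict_linear_order_on H (P x))"

definition assignments :: "nat \<Rightarrow> 'h set \<Rightarrow> (nat \<Rightarrow> 'h) set" where
  "assignments n H =
     {\<mu>. bij_betw \<mu> (agents n) H \<and> (\<forall>x. x \<notin> agents n \<longrightarrow> \<mu> x = undefined)}"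

definition weakly_prefers ::
  "(nat \<Rightarrow> ('h \<times> 'h) set) \<Rightarrow> nat \<Rightarrow> (nat \<Rightarrow> 'h) \<Rightarrow> (nat \<Rightarrow> 'h) \<Rightarrow> bool" where
  "weakly_prefers P x \<mu> \<nu> \<longleftrightarrow> (\<mu> x, \<nu> x) \<in> P x \<or> \<mu> x = \<nu> x"

definition supporters ::
  "nat \<Rightarrow> (nat \<Rightarrow> ('h \<times> 'h) set) \<Rightarrow> (nat \<Rightarrow> 'h) \<Rightarrow> (nat \<Rightarrow> 'h) \<Rightarrow> nat set" where
  "supporters n P \<mu> \<nu> = {x \<in> agents n. weakly_prefers P x \<mu> \<nu>}"

definition majority_pref ::
  "nat \<Rightarrow> (nat \<Rightarrow> ('h \<times> 'h) set) \<Rightarrow> (nat \<Rightarrow> 'h) \<Rightarrow> (nat \<Rightarrow> 'h) \<Rightarrow> bool" where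
  "majority_pref n P \<mu> \<nu> \<longleftrightarrow> card (supporters n P \<mu> \<nu>) \<ge> card (supporters n P \<nu> \<mu>)"

definition majority_graph ::
  "nat \<Rightarrow> 'h set \<Rightarrow> (nat \<Rightarrow> ('h \<times> 'h) set)
     \<Rightarrow> (nat \<Rightarrow> 'h) set \<times> ((nat \<Rightarrow> 'h) \<times> (nat \<Rightarrow> 'h)) set" where
  "majority_graph n H P =
     (assignments n H,
      {(\<mu>, \<nu>). \<mu> \<in> assignments n H \<and> \<nu> \<in> assignments n H \<and> majority_pref n P \<mu> \<nu>})"

definition decomposition ::
  "nat \<Rightarrow> 'h set \<Rightarrow> (nat \<Rightarrow> ('h \<times> 'h) set) \<Rightarrow> 'h set list \<Rightarrow> bool" where
  "decomposition n H P Hs \<longleftrightarrow>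
     (\<forall>j < length Hs. Hs ! j \<noteq> {}) \<and>
     (\<forall>i < length Hs. \<forall>j < length Hs. i \<noteq> j \<longrightarrow> Hs ! i \<inter> Hs ! j = {}) \<and>
     \<Union> (set Hs) = H \<and>
     (\<forall>j l. j < l \<and> l < length Hs \<longrightarrow>
        (\<forall>p \<in> Hs ! j. \<forall>q \<in> Hs ! l. \<forall>x \<in> agents n. (p, q) \<in> P x))"

definition rotation_equivalent ::
  "nat \<Rightarrow> 'h set \<Rightarrow> (nat \<Rightarrow> ('h \<times> 'h) set) \<Rightarrow> (nat \<Rightarrow> ('h \<times> 'h) set) \<Rightarrow> bool" where
  "rotation_equivalent n H P P' \<longleftrightarrow>
     (\<exists>Hs. decomposition n H P Hs \<and>
        (\<forall>j < length Hs. \<forall>p \<in> Hs ! j. \<forall>q \<in> Hs ! j. \<forall>x \<in> agents n.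
            ((p, q) \<in> P x \<longleftrightarrow> (p, q) \<in> P' x)) \<and>
        (\<exists>r < length Hs. decomposition n H P' (rotate r Hs)))"

end

theory Submission
  imports Defs "HOL-Combinatorics.Transposition"
begin

lemma prof_facts:
  assumes "is_profile n H P" "x \<in> agents n"
  shows "P x \<subseteq> H \<times> H" "trans (P x)" "irrefl (P x)" "total_on H (P x)"
  using assms unfolding is_profile_def strict_linear_order_on_def by auto

lemma prof_notin: "is_profile n H P \<Longrightarrow> x \<in> agents n \<Longrightarrow> (p,p) \<notin> P x"
  using prof_facts(3) by (metis irrefl_def)

lemma prof_asym: "is_profile n H P \<Longrightarrow> x \<in> agents n \<Longrightarrow> (p,q) \<in> P x \<Longrightarrow> (q,p) \<notin> P x"
  using prof_facts(2,3) by (metis irrefl_def transE)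

lemma prof_trans: "is_profile n H P \<Longrightarrow> x \<in> agents n \<Longrightarrow> (p,q) \<in> P x \<Longrightarrow> (q,r) \<in> P x \<Longrightarrow> (p,r) \<in> P x"
  using prof_facts(2) by (metis transE)

lemma prof_tot: "is_profile n H P \<Longrightarrow> x \<in> agents n \<Longrightarrow> p \<in> H \<Longrightarrow> q \<in> H \<Longrightarrow> p \<noteq> q
   \<Longrightarrow> (q,p) \<in> P x \<longleftrightarrow> (p,q) \<notin> P x"
  using prof_facts(4) prof_asym unfolding total_on_def by metis

lemma extend_bij:
  assumes "finite A" "finite B" "card A = card B" "inj_on f S" "S \<subseteq> A" "f ` S \<subseteq> B"
  shows "\<exists>g. bij_betw g A B \<and> (\<forall>s\<in>S. g s = f s)"
proof -
  have fS: "finite S" using assms(1,5) finite_subset by blast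
  have c1: "card (A - S) = card A - card S" using assms(5) fS by (simp add: card_Diff_subset)
  have c2: "card (B - f ` S) = card B - card S"
    using assms(4,6) fS by (simp add: card_Diff_subset card_image)
  obtain h where h: "bij_betw h (A - S) (B - f ` S)"
    using c1 c2 assms(1-3) by (metis finite_Diff finite_same_card_bij)
  define g where "g = (\<lambda>a. if a \<in> S then f a else h a)"
  have b1: "bij_betw g S (f ` S)"
    using assms(4) bij_betw_cong[of S g f "f ` S"] inj_on_imp_bij_betw[of f S] unfolding g_def by simp
  have b2: "bij_betw g (A - S) (B - f ` S)"
    using h bij_betw_cong[of "A - S" g h "B - f ` S"] unfolding g_def by simp
  have "bij_betw g (S \<union> (A - S)) (f ` S \<union> (B - f ` S))"
    by (rule bij_betw_combine[OF b1 b2]) blast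
  moreover have "S \<union> (A - S) = A" "f ` S \<union> (B - f ` S) = B" using assms(5,6) by auto
  ultimately show ?thesis unfolding g_def by auto
qed

lemma card_agents: "card (agents n) = n" "finite (agents n)" unfolding agents_def by auto

lemma assign_exists:
  assumes "finite H" "card H = n" "inj_on f S" "S \<subseteq> agents n" "f ` S \<subseteq> H"
  shows "\<exists>\<mu>\<in>assignments n H. \<forall>s\<in>S. \<mu> s = f s"
proof -
  obtain g where g: "bij_betw g (agents n) H" "\<forall>s\<in>S. g s = f s"
    using extend_bij[OF card_agents(2) assms(1) _ assms(3-5)] assms(2) card_agents(1) by auto
  define \<mu> where "\<mu> = (\<lambda>a. if a \<in> agents n then g a else undefined)"
  have "bij_betw \<mu> (agents n) H" using g(1) unfolding \<mu>_def
    by (rule bij_betw_cong[THEN iffD1, rotated]) auto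
  then have "\<mu> \<in> assignments n H" unfolding assignments_def \<mu>_def by auto
  moreover have "\<forall>s\<in>S. \<mu> s = f s" using g(2) assms(4) unfolding \<mu>_def by auto
  ultimately show ?thesis by blast
qed

lemma perm_assign:
  assumes "\<mu> \<in> assignments n H" "bij_betw \<sigma> (agents n) (agents n)" "\<forall>w. w \<notin> agents n \<longrightarrow> \<sigma> w = w"
  shows "\<mu> \<circ> \<sigma> \<in> assignments n H"
  using assms unfolding assignments_def by (auto intro: bij_betw_trans)

lemma maj_local:
  assumes "K \<subseteq> agents n" "\<forall>w\<in>agents n - K. \<mu> w = \<nu> w"
  shows "majority_pref n R \<mu> \<nu> \<longleftrightarrow>
     card {w\<in>K. weakly_prefers R w \<mu> \<nu>} \<ge> card {w\<in>K. weakly_prefers R w \<nu> \<mu>}"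
proof -
  have fin: "finite (agents n)" by (rule card_agents(2))
  have fK: "finite K" using assms(1) fin finite_subset by blast
  have e: "supporters n R a b = (agents n - K) \<union> {w\<in>K. weakly_prefers R w a b}"
    if "\<forall>w\<in>agents n - K. a w = b w" for a b
    using that assms(1) unfolding supporters_def weakly_prefers_def by auto
  have c: "card (supporters n R a b) = card (agents n - K) + card {w\<in>K. weakly_prefers R w a b}"
    if "\<forall>w\<in>agents n - K. a w = b w" for a b
    unfolding e[OF that] by (rule card_Un_disjoint) (use fin fK in auto)
  show ?thesis unfolding majority_pref_def using c[of \<mu> \<nu>] c[of \<nu> \<mu>] assms(2) by auto
qed

lemma card_ins_filter: "finite A \<Longrightarrow> a \<notin> A \<Longrightarrow> card {w\<in>insert a A. Q w} = of_bool (Q a) + card {w\<in>A. Q w}"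
proof -
  assume a: "finite A" "a \<notin> A"
  have "{w\<in>insert a A. Q w} = (if Q a then insert a {w\<in>A. Q w} else {w\<in>A. Q w})" by auto
  then show ?thesis using a by simp
qed
lemma card1: "card {w\<in>{x}. Q w} = of_bool (Q x)"
  using card_ins_filter[of "{}" x Q] by simp
lemma card2: "x \<noteq> y \<Longrightarrow>
   card {w\<in>{x,y}. Q w} = of_bool (Q x) + of_bool (Q y)"
  using card_ins_filter[of "{y}" x Q] card1[of y Q] by simp
lemma card3: "x \<noteq> y \<Longrightarrow> x \<noteq> z \<Longrightarrow> y \<noteq> z \<Longrightarrow>
   card {w\<in>{x,y,z}. Q w} = of_bool (Q x) + of_bool (Q y) + of_bool (Q z)"
  using card_ins_filter[of "{y,z}" x Q] card2[of y z Q] by simp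

lemma swap_pref:
  assumes R: "is_profile n H R" and xy: "x \<in> agents n" "y \<in> agents n" "x \<noteq> y"
    and pq: "p \<in> H" "q \<in> H" "p \<noteq> q"
    and mu: "\<mu> x = p" "\<mu> y = q"
  shows "majority_pref n R \<mu> (\<mu> \<circ> transpose x y) \<longleftrightarrow> ((p,q) \<in> R y \<longrightarrow> (p,q) \<in> R x)"
proof -
  let ?\<nu> = "\<mu> \<circ> transpose x y"
  have "majority_pref n R \<mu> ?\<nu> \<longleftrightarrow>
     card {w\<in>{x,y}. weakly_prefers R w \<mu> ?\<nu>} \<ge> card {w\<in>{x,y}. weakly_prefers R w ?\<nu> \<mu>}"
    by (rule maj_local) (use xy in auto)
  also have "\<dots> \<longleftrightarrow> of_bool ((p,q) \<in> R x) + of_bool ((q,p) \<in> R y)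
      \<ge> (of_bool ((q,p) \<in> R x) + of_bool ((p,q) \<in> R y) :: nat)"
    unfolding card2[OF xy(3)] using mu pq xy by (simp add: weakly_prefers_def)
  also have "\<dots> \<longleftrightarrow> ((p,q) \<in> R y \<longrightarrow> (p,q) \<in> R x)"
    using prof_tot[OF R xy(1) pq] prof_tot[OF R xy(2) pq] by auto
  finally show ?thesis .
qed

lemma cyc_pref:
  assumes R: "is_profile n H R" and xyz: "x \<in> agents n" "y \<in> agents n" "z \<in> agents n"
    "x \<noteq> y" "x \<noteq> z" "y \<noteq> z"
    and pqr: "p \<in> H" "q \<in> H" "r \<in> H" "p \<noteq> q" "p \<noteq> r" "q \<noteq> r"
    and mu: "\<mu> x = p" "\<mu> y = q" "\<mu> z = r"
  shows "majority_pref n R \<mu> (\<mu> \<circ> (transpose x y \<circ> transpose y z)) \<longleftrightarrow>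
     ((p,q) \<in> R x \<and> (q,r) \<in> R y \<or> (p,q) \<in> R x \<and> (r,p) \<in> R z \<or> (q,r) \<in> R y \<and> (r,p) \<in> R z)"
proof -
  let ?\<nu> = "\<mu> \<circ> (transpose x y \<circ> transpose y z)"
  have "majority_pref n R \<mu> ?\<nu> \<longleftrightarrow>
     card {w\<in>{x,y,z}. weakly_prefers R w \<mu> ?\<nu>} \<ge> card {w\<in>{x,y,z}. weakly_prefers R w ?\<nu> \<mu>}"
    by (rule maj_local) (use xyz in auto)
  also have "\<dots> \<longleftrightarrow> of_bool ((p,q) \<in> R x) + of_bool ((q,r) \<in> R y) + of_bool ((r,p) \<in> R z)
      \<ge> (of_bool ((q,p) \<in> R x) + of_bool ((r,q) \<in> R y) + of_bool ((p,r) \<in> R z) :: nat)"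
    unfolding card3[OF xyz(4-6)] using mu pqr xyz by (simp add: weakly_prefers_def)
  also have "\<dots> \<longleftrightarrow> ((p,q) \<in> R x \<and> (q,r) \<in> R y \<or> (p,q) \<in> R x \<and> (r,p) \<in> R z \<or> (q,r) \<in> R y \<and> (r,p) \<in> R z)"
    using prof_tot[OF R xyz(1) pqr(1,2,4)] prof_tot[OF R xyz(2) pqr(2,3,6)] 
      prof_tot[OF R xyz(3) pqr(3,1) pqr(5)[symmetric]] by auto
  finally show ?thesis .
qed

lemma transpose_assign:
  assumes "\<mu> \<in> assignments n H" "x \<in> agents n" "y \<in> agents n"
  shows "\<mu> \<circ> transpose x y \<in> assignments n H"
  by (rule perm_assign[OF assms(1)]) (use assms(2,3) in \<open>auto simp: transpose_def\<close>)

lemma transpose2_assign: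
  assumes "\<mu> \<in> assignments n H" "x \<in> agents n" "y \<in> agents n" "z \<in> agents n"
  shows "\<mu> \<circ> (transpose x y \<circ> transpose y z) \<in> assignments n H"
proof -
  have "\<mu> \<circ> transpose x y \<in> assignments n H" by (rule transpose_assign) fact+
  from transpose_assign[OF this assms(3,4)] show ?thesis by (simp add: comp_assoc)
qed



lemma cut_card:
  assumes pP: "is_profile n H P" and pP': "is_profile n H P'" and AH: "A \<subseteq> H"
    and AB: "\<forall>x\<in>agents n. \<forall>p\<in>A. \<forall>q\<in>H - A. (p,q) \<in> P x"
    and cut: "\<forall>x\<in>agents n. \<forall>p\<in>H. \<forall>q\<in>H.
        ((p,q) \<in> P' x \<longleftrightarrow> ((p \<in> A \<longleftrightarrow> q \<in> A) \<and> (p,q) \<in> P x) \<or> (p \<notin> A \<and> q \<in> A))"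
    and mu: "\<mu> \<in> assignments n H" and nu: "\<nu> \<in> assignments n H"
  shows "card (supporters n P \<mu> \<nu>) = card (supporters n P' \<mu> \<nu>)"
proof -
  let ?N = "agents n"
  have bm: "bij_betw \<mu> ?N H" and bn: "bij_betw \<nu> ?N H" using mu nu unfolding assignments_def by auto
  have inH: "\<mu> x \<in> H" "\<nu> x \<in> H" if "x \<in> ?N" for x
    using bij_betw_apply[OF bm that] bij_betw_apply[OF bn that] by auto
  define Y where "Y = {x\<in>?N. \<mu> x \<in> A \<longleftrightarrow> \<nu> x \<in> A}"
  define X1 where "X1 = {x\<in>?N. \<mu> x \<in> A \<and> \<nu> x \<notin> A}"
  define X2 where "X2 = {x\<in>?N. \<mu> x \<notin> A \<and> \<nu> x \<in> A}"
  have finN: "finite ?N" by (rule card_agents(2))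
  have cutI: "(\<mu> x, \<nu> x) \<in> P' x \<longleftrightarrow> ((\<mu> x \<in> A \<longleftrightarrow> \<nu> x \<in> A) \<and> (\<mu> x, \<nu> x) \<in> P x) \<or> (\<mu> x \<notin> A \<and> \<nu> x \<in> A)"
    if "x \<in> ?N" for x
    using cut[rule_format, OF that inH(1)[OF that] inH(2)[OF that]] .
  have wY: "weakly_prefers P x \<mu> \<nu> \<longleftrightarrow> weakly_prefers P' x \<mu> \<nu>" if "x \<in> Y" for x
  proof -
    have x: "x \<in> ?N" "\<mu> x \<in> A \<longleftrightarrow> \<nu> x \<in> A" using that unfolding Y_def by auto
    show ?thesis using cutI[OF x(1)] x(2) unfolding weakly_prefers_def by blast
  qed
  have w1: "weakly_prefers P x \<mu> \<nu> \<and> \<not> weakly_prefers P' x \<mu> \<nu>" if "x \<in> X1" for x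
  proof -
    have x: "x \<in> ?N" "\<mu> x \<in> A" "\<nu> x \<notin> A" using that unfolding X1_def by auto
    have "(\<mu> x, \<nu> x) \<in> P x" using AB[rule_format, OF x(1,2)] x(3) inH[OF x(1)] by blast
    moreover have "(\<mu> x, \<nu> x) \<notin> P' x" using cutI[OF x(1)] x by blast
    ultimately show ?thesis using x unfolding weakly_prefers_def by auto
  qed
  have w2: "\<not> weakly_prefers P x \<mu> \<nu> \<and> weakly_prefers P' x \<mu> \<nu>" if "x \<in> X2" for x
  proof -
    have x: "x \<in> ?N" "\<mu> x \<notin> A" "\<nu> x \<in> A" using that unfolding X2_def by auto
    have "(\<nu> x, \<mu> x) \<in> P x" using AB[rule_format, OF x(1,3)] x(2) inH[OF x(1)] by blast
    then have "(\<mu> x, \<nu> x) \<notin> P x" using prof_asym[OF pP x(1)] by blast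
    moreover have "(\<mu> x, \<nu> x) \<in> P' x" using cutI[OF x(1)] x by blast
    ultimately show ?thesis using x unfolding weakly_prefers_def by auto
  qed
  have cover: "x \<in> Y \<or> x \<in> X1 \<or> x \<in> X2" if "x \<in> ?N" for x
    using that unfolding Y_def X1_def X2_def by auto
  have subs: "Y \<subseteq> ?N" "X1 \<subseteq> ?N" "X2 \<subseteq> ?N" unfolding Y_def X1_def X2_def by auto
  have disj: "x \<notin> X1" "x \<notin> X2" if "x \<in> Y" for x using that unfolding Y_def X1_def X2_def by auto
  have s1: "supporters n P \<mu> \<nu> = {x\<in>Y. weakly_prefers P x \<mu> \<nu>} \<union> X1"
  proof (rule set_eqI)
    fix x
    show "x \<in> supporters n P \<mu> \<nu> \<longleftrightarrow> x \<in> {x\<in>Y. weakly_prefers P x \<mu> \<nu>} \<union> X1"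
      unfolding supporters_def mem_Collect_eq Un_iff
      using cover[of x] subs w1[of x] w2[of x] by blast
  qed
  have s2: "supporters n P' \<mu> \<nu> = {x\<in>Y. weakly_prefers P x \<mu> \<nu>} \<union> X2"
  proof (rule set_eqI)
    fix x
    show "x \<in> supporters n P' \<mu> \<nu> \<longleftrightarrow> x \<in> {x\<in>Y. weakly_prefers P x \<mu> \<nu>} \<union> X2"
      unfolding supporters_def mem_Collect_eq Un_iff
      using cover[of x] subs w1[of x] w2[of x] wY[of x] by blast
  qed
  have cA: "card {x\<in>?N. f x \<in> A} = card A" if bf: "bij_betw f ?N H" for f
  proof -
    have "inj_on f {x\<in>?N. f x \<in> A}" using bf unfolding bij_betw_def by (auto intro: inj_on_subset)
    moreover have "f ` {x\<in>?N. f x \<in> A} = A" using bf AH unfolding bij_betw_def by auto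
    ultimately show ?thesis using card_image by fastforce
  qed
  define Z where "Z = {x\<in>?N. \<mu> x \<in> A \<and> \<nu> x \<in> A}"
  have "X1 = {x\<in>?N. \<mu> x \<in> A} - Z" "X2 = {x\<in>?N. \<nu> x \<in> A} - Z"
    unfolding X1_def X2_def Z_def by auto
  moreover have "Z \<subseteq> {x\<in>?N. \<mu> x \<in> A}" "Z \<subseteq> {x\<in>?N. \<nu> x \<in> A}" "finite Z"
    unfolding Z_def using finN by auto
  ultimately have cX: "card X1 = card X2" using cA[OF bm] cA[OF bn] by (simp add: card_Diff_subset)
  have fY: "finite {x\<in>Y. weakly_prefers P x \<mu> \<nu>}" using finN unfolding Y_def by auto
  have fX: "finite X1" "finite X2" using finN unfolding X1_def X2_def by auto
  have d1: "{x\<in>Y. weakly_prefers P x \<mu> \<nu>} \<inter> X1 = {}" "{x\<in>Y. weakly_prefers P x \<mu> \<nu>} \<inter> X2 = {}"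
    using disj by auto
  show ?thesis unfolding s1 s2 using card_Un_disjoint[OF fY fX(1) d1(1)] card_Un_disjoint[OF fY fX(2) d1(2)] cX
    by simp
qed

lemma cut_graph:
  assumes pP: "is_profile n H P" and pP': "is_profile n H P'" and AH: "A \<subseteq> H"
    and AB: "\<forall>x\<in>agents n. \<forall>p\<in>A. \<forall>q\<in>H - A. (p,q) \<in> P x"
    and cut: "\<forall>x\<in>agents n. \<forall>p\<in>H. \<forall>q\<in>H.
        ((p,q) \<in> P' x \<longleftrightarrow> ((p \<in> A \<longleftrightarrow> q \<in> A) \<and> (p,q) \<in> P x) \<or> (p \<notin> A \<and> q \<in> A))"
  shows "majority_graph n H P = majority_graph n H P'"
proof -
  have "majority_pref n P \<mu> \<nu> \<longleftrightarrow> majority_pref n P' \<mu> \<nu>"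
    if "\<mu> \<in> assignments n H" "\<nu> \<in> assignments n H" for \<mu> \<nu>
    unfolding majority_pref_def using cut_card[OF assms that] cut_card[OF assms that(2,1)] by simp
  then show ?thesis unfolding majority_graph_def by auto
qed

lemma decomp_ord:
  assumes "decomposition n H R Hs" "j < l" "l < length Hs" "p \<in> Hs ! j" "q \<in> Hs ! l" "x \<in> agents n"
  shows "(p,q) \<in> R x"
proof -
  have "\<forall>j l. j < l \<and> l < length Hs \<longrightarrow>
        (\<forall>p \<in> Hs ! j. \<forall>q \<in> Hs ! l. \<forall>x \<in> agents n. (p, q) \<in> R x)"
    using assms(1) unfolding decomposition_def by (elim conjE)
  then show ?thesis using assms(2-6) by blast
qed

lemma decomp_order:
  assumes d: "decomposition n H R Hs" and R: "is_profile n H R" and x: "x \<in> agents n"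
    and p: "p \<in> Hs ! i" and q: "q \<in> Hs ! j" and ij: "i \<noteq> j" "i < length Hs" "j < length Hs"
  shows "(p,q) \<in> R x \<longleftrightarrow> i < j"
proof (cases "i < j")
  case True then show ?thesis using decomp_ord[OF d True ij(3) p q x] by simp
next
  case False
  then have "j < i" using ij by auto
  then have "(q,p) \<in> R x" using decomp_ord[OF d _ ij(2) q p x] by simp
  then show ?thesis using prof_asym[OF R x] False by blast
qed

lemma rot_pos:
  fixes i k r :: nat
  assumes "i < k" "r < k"
  shows "(i + k - r) mod k = (if r \<le> i then i - r else i + k - r)"
proof (cases "r \<le> i")
  case True
  obtain d where d: "i = r + d" using True le_Suc_ex by blast
  then have "d < k" using assms by linarith
  have "(i + k - r) mod k = (d + k) mod k" using d by (simp add: add.commute)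
  also have "\<dots> = d mod k" by (rule mod_add_self2)
  also have "\<dots> = d" using \<open>d < k\<close> by (rule mod_less)
  finally show ?thesis using True d by simp
next
  case False
  then have "i + k - r < k" using assms by linarith
  then show ?thesis using False by (simp only: mod_less if_False)
qed

lemma rot_pos_inv:
  fixes i k r :: nat
  assumes "i < k" "r < k"
  shows "(r + (i + k - r) mod k) mod k = i"
proof -
  have "(r + (i + k - r) mod k) mod k = (r + (i + k - r)) mod k" by (rule mod_add_right_eq)
  also have "r + (i + k - r) = i + k" using assms by simp
  also have "(i + k) mod k = i mod k" by (rule mod_add_self2)
  also have "\<dots> = i" using assms(1) by (rule mod_less)
  finally show ?thesis .
qed

lemma decomp_disj: "decomposition n H R Hs \<Longrightarrow> i < length Hs \<Longrightarrow> j < length Hs \<Longrightarrow> i \<noteq> j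
   \<Longrightarrow> Hs ! i \<inter> Hs ! j = {}"
  unfolding decomposition_def by simp

lemma decomp_union: "decomposition n H R Hs \<Longrightarrow> \<Union> (set Hs) = H"
  unfolding decomposition_def by simp

lemma block_of:
  assumes d: "decomposition n H R Hs" and h: "h \<in> H"
  obtains i where "i < length Hs" "h \<in> Hs ! i"
proof -
  from h decomp_union[OF d] obtain X where "X \<in> set Hs" "h \<in> X" by blast
  then obtain i where "i < length Hs" "Hs ! i = X" by (auto simp: in_set_conv_nth)
  then show ?thesis using that \<open>h \<in> X\<close> by blast
qed

lemma block_uniq:
  assumes d: "decomposition n H R Hs" "h \<in> Hs ! i" "h \<in> Hs ! j" "i < length Hs" "j < length Hs"
  shows "i = j"
proof (rule ccontr)
  assume "i \<noteq> j"
  from decomp_disj[OF d(1) d(4,5) this] d(2,3) show False by blast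
qed

lemma rot_to_cut:
  assumes pP: "is_profile n H P" and pP': "is_profile n H P'"
    and rot: "rotation_equivalent n H P P'"
  shows "majority_graph n H P = majority_graph n H P'"
proof -
  obtain Hs r where dP: "decomposition n H P Hs"
    and within: "\<forall>j < length Hs. \<forall>p \<in> Hs ! j. \<forall>q \<in> Hs ! j. \<forall>x \<in> agents n.
            ((p, q) \<in> P x \<longleftrightarrow> (p, q) \<in> P' x)"
    and r: "r < length Hs" and dP': "decomposition n H P' (rotate r Hs)"
    using rot unfolding rotation_equivalent_def by blast
  define k where "k = length Hs"
  define A where "A = \<Union> (set (take r Hs))"
  have HsH: "\<Union> (set Hs) = H" by (rule decomp_union[OF dP])
  have "set (take r Hs) \<subseteq> set Hs" by (rule set_take_subset)
  then have AH: "A \<subseteq> H" unfolding A_def HsH[symmetric] by blast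
  have inA: "h \<in> A \<longleftrightarrow> i < r" if "i < k" "h \<in> Hs ! i" for h i
  proof
    assume "h \<in> A"
    then obtain X where "X \<in> set (take r Hs)" "h \<in> X" unfolding A_def by blast
    then obtain i' where i': "i' < length (take r Hs)" "take r Hs ! i' = X" by (metis in_set_conv_nth)
    then have "i' < r" "i' < k" "h \<in> Hs ! i'" using \<open>h \<in> X\<close> unfolding k_def by auto
    then show "i < r" using block_uniq[OF dP that(2) \<open>h \<in> Hs ! i'\<close>] that(1) unfolding k_def by simp
  next
    assume "i < r"
    then have "Hs ! i \<in> set (take r Hs)" using that(1) unfolding k_def
      by (metis in_set_conv_nth length_take min_less_iff_conj nth_take)
    then show "h \<in> A" unfolding A_def using that(2) by blast
  qed
  define m where "m i = (i + k - r) mod k" for i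
  have kpos: "0 < k" using r unfolding k_def by linarith
  have mk: "m i < k" for i unfolding m_def using kpos by simp
  have rotm: "rotate r Hs ! m i = Hs ! i" if "i < k" for i
    using nth_rotate[of "m i" Hs r] mk[of i] rot_pos_inv[OF that r[folded k_def]] unfolding k_def m_def
    by simp
  have lenrot: "length (rotate r Hs) = k" unfolding k_def by simp
  have P'ord: "(p,q) \<in> P' x \<longleftrightarrow> m i < m j"
    if "x \<in> agents n" "p \<in> Hs ! i" "q \<in> Hs ! j" "i \<noteq> j" "i < k" "j < k" for x p q i j
  proof (rule decomp_order[OF dP' pP' that(1)])
    show "p \<in> rotate r Hs ! m i" using rotm that by simp
    show "q \<in> rotate r Hs ! m j" using rotm that by simp
    show "m i \<noteq> m j" using rot_pos_inv[OF that(5) r[folded k_def]] rot_pos_inv[OF that(6) r[folded k_def]]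
      that(4) unfolding m_def by metis
  qed (use mk lenrot in auto)
  have AB: "\<forall>x\<in>agents n. \<forall>p\<in>A. \<forall>q\<in>H - A. (p,q) \<in> P x"
  proof (intro ballI)
    fix x p q assume x: "x \<in> agents n" and pA: "p \<in> A" and qB: "q \<in> H - A"
    obtain i where i: "i < k" "p \<in> Hs ! i" using block_of[OF dP, of p] pA AH unfolding k_def by blast
    obtain j where j: "j < k" "q \<in> Hs ! j" using block_of[OF dP, of q] qB unfolding k_def by blast
    have "i < r" "\<not> j < r" using inA i j pA qB by auto
    then show "(p,q) \<in> P x" using decomp_order[OF dP pP x i(2) j(2)] i j unfolding k_def by simp
  qed
  have cut: "\<forall>x\<in>agents n. \<forall>p\<in>H. \<forall>q\<in>H.
        ((p,q) \<in> P' x \<longleftrightarrow> ((p \<in> A \<longleftrightarrow> q \<in> A) \<and> (p,q) \<in> P x) \<or> (p \<notin> A \<and> q \<in> A))"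
  proof (intro ballI)
    fix x p q assume x: "x \<in> agents n" and p: "p \<in> H" and q: "q \<in> H"
    obtain i where i: "i < k" "p \<in> Hs ! i" using block_of[OF dP p] unfolding k_def by blast
    obtain j where j: "j < k" "q \<in> Hs ! j" using block_of[OF dP q] unfolding k_def by blast
    show "((p,q) \<in> P' x \<longleftrightarrow> ((p \<in> A \<longleftrightarrow> q \<in> A) \<and> (p,q) \<in> P x) \<or> (p \<notin> A \<and> q \<in> A))"
    proof (cases "i = j")
      case True
      then show ?thesis using within i j x inA unfolding k_def by auto
    next
      case False
      have e1: "(p,q) \<in> P x \<longleftrightarrow> i < j" using decomp_order[OF dP pP x i(2) j(2) False] i j unfolding k_def by simp
      have e2: "(p,q) \<in> P' x \<longleftrightarrow> m i < m j" using P'ord[OF x i(2) j(2) False i(1) j(1)] .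
      have ar: "m i < m j \<longleftrightarrow> ((i < r \<longleftrightarrow> j < r) \<and> i < j) \<or> (\<not> i < r \<and> j < r)"
        unfolding m_def rot_pos[OF i(1) r[folded k_def]] rot_pos[OF j(1) r[folded k_def]]
        using i(1) j(1) r[folded k_def] False by auto
      show ?thesis unfolding e1 e2 ar using inA[OF i] inA[OF j] by blast
    qed
  qed
  show ?thesis by (rule cut_graph[OF pP pP' AH AB cut])
qed

context
  fixes n :: nat and H :: "'h set" and P P' :: "nat \<Rightarrow> ('h \<times> 'h) set"
  assumes fin: "finite H" and cardH: "card H = n"
    and pP: "is_profile n H P" and pP': "is_profile n H P'"
    and geq: "\<forall>\<mu>\<in>assignments n H. \<forall>\<nu>\<in>assignments n H.
        majority_pref n P \<mu> \<nu> \<longleftrightarrow> majority_pref n P' \<mu> \<nu>"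
begin

lemma swap_eq:
  assumes xy: "x \<in> agents n" "y \<in> agents n" "x \<noteq> y"
    and pq: "p \<in> H" "q \<in> H" "p \<noteq> q"
  shows "((p,q) \<in> P y \<longrightarrow> (p,q) \<in> P x) \<longleftrightarrow> ((p,q) \<in> P' y \<longrightarrow> (p,q) \<in> P' x)"
proof -
  obtain \<mu> where mu: "\<mu> \<in> assignments n H" "\<forall>s\<in>{x,y}. \<mu> s = (if s = x then p else q)"
    using assign_exists[OF fin cardH, of "\<lambda>s. if s = x then p else q" "{x,y}"] xy pq
    by (auto simp: inj_on_def)
  have m: "\<mu> x = p" "\<mu> y = q" using mu(2) xy(3) by auto
  have "\<mu> \<circ> transpose x y \<in> assignments n H" by (rule transpose_assign) (use mu xy in auto)
  then have "majority_pref n P \<mu> (\<mu> \<circ> transpose x y) \<longleftrightarrow> majority_pref n P' \<mu> (\<mu> \<circ> transpose x y)"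
    using geq mu(1) by blast
  then show ?thesis using swap_pref[OF pP xy pq m] swap_pref[OF pP' xy pq m] by simp
qed

lemma cyc_eq:
  assumes xyz: "x \<in> agents n" "y \<in> agents n" "z \<in> agents n"
    "x \<noteq> y" "x \<noteq> z" "y \<noteq> z"
    and pqr: "p \<in> H" "q \<in> H" "r \<in> H" "p \<noteq> q" "p \<noteq> r" "q \<noteq> r"
  shows "((p,q) \<in> P x \<and> (q,r) \<in> P y \<or> (p,q) \<in> P x \<and> (r,p) \<in> P z \<or> (q,r) \<in> P y \<and> (r,p) \<in> P z)
    \<longleftrightarrow> ((p,q) \<in> P' x \<and> (q,r) \<in> P' y \<or> (p,q) \<in> P' x \<and> (r,p) \<in> P' z \<or> (q,r) \<in> P' y \<and> (r,p) \<in> P' z)"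
proof -
  obtain \<mu> where mu: "\<mu> \<in> assignments n H"
      "\<forall>s\<in>{x,y,z}. \<mu> s = (if s = x then p else if s = y then q else r)"
    using assign_exists[OF fin cardH, of "\<lambda>s. if s = x then p else if s = y then q else r" "{x,y,z}"] xyz pqr
    by (auto simp: inj_on_def)
  have m: "\<mu> x = p" "\<mu> y = q" "\<mu> z = r" using mu(2) xyz by auto
  have "\<mu> \<circ> (transpose x y \<circ> transpose y z) \<in> assignments n H"
    by (rule transpose2_assign) (use mu xyz in auto)
  then have "majority_pref n P \<mu> (\<mu> \<circ> (transpose x y \<circ> transpose y z)) \<longleftrightarrow>
      majority_pref n P' \<mu> (\<mu> \<circ> (transpose x y \<circ> transpose y z))"
    using geq mu(1) by blast
  then show ?thesis using cyc_pref[OF pP xyz pqr m] cyc_pref[OF pP' xyz pqr m] by simp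
qed

definition "Fl = {(p,q). p \<in> H \<and> q \<in> H \<and> (\<exists>x\<in>agents n. (p,q) \<in> P x \<and> (q,p) \<in> P' x)}"

lemma Fl_sub: "(p,q) \<in> Fl \<Longrightarrow> p \<in> H \<and> q \<in> H" unfolding Fl_def by auto

lemma F1:
  assumes "(p,q) \<in> Fl" "y \<in> agents n"
  shows "(p,q) \<in> P y \<and> (q,p) \<in> P' y"
proof -
  obtain x where x: "x \<in> agents n" "(p,q) \<in> P x" "(q,p) \<in> P' x" "p \<in> H" "q \<in> H"
    using assms(1) unfolding Fl_def by auto
  have pq: "p \<noteq> q" using x prof_notin[OF pP] by blast
  have nx: "(p,q) \<notin> P' x" using prof_asym[OF pP' x(1) x(3)] .
  show ?thesis
  proof (cases "x = y")
    case True then show ?thesis using x by simp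
  next
    case False
    have a: "(p,q) \<in> P y" using swap_eq[OF assms(2) x(1) _ x(4,5) pq] False x nx by blast
    have "(p,q) \<notin> P' y" using swap_eq[OF x(1) assms(2) False x(4,5) pq] a x nx by blast
    then show ?thesis using a prof_tot[OF pP' assms(2) x(4,5) pq] by blast
  qed
qed

lemma F2:
  assumes "p \<in> H" "q \<in> H" "(p,q) \<notin> Fl" "(q,p) \<notin> Fl" "x \<in> agents n"
  shows "(p,q) \<in> P x \<longleftrightarrow> (p,q) \<in> P' x"
proof (cases "p = q")
  case True then show ?thesis using prof_notin[OF pP assms(5)] prof_notin[OF pP' assms(5)] by simp
next
  case False
  show ?thesis using assms prof_tot[OF pP assms(5,1,2) False] prof_tot[OF pP' assms(5,1,2) False]
    prof_tot[OF pP assms(5,2,1)] prof_tot[OF pP' assms(5,2,1)] False unfolding Fl_def by blast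
qed

lemma three_agents:
  assumes "p \<in> H" "q \<in> H" "r \<in> H" "p \<noteq> q" "p \<noteq> r" "q \<noteq> r"
  shows "1 \<in> agents n" "2 \<in> agents n" "3 \<in> agents n"
proof -
  have "card {p,q,r} \<le> card H" using assms fin by (intro card_mono) auto
  then have "n \<ge> 3" using assms cardH by simp
  then show "1 \<in> agents n" "2 \<in> agents n" "3 \<in> agents n" unfolding agents_def by auto
qed

lemma F3:
  assumes "(p,q) \<in> Fl" "(q,r) \<in> Fl"
  shows False
proof -
  have H: "p \<in> H" "q \<in> H" "r \<in> H" using assms Fl_sub by auto
  have "1 \<in> agents n" using H(1) cardH unfolding agents_def
    by (metis atLeastAtMost_iff card_0_eq empty_iff fin le_numeral_extra(4) less_one not_le)
  then have a1: "(p,q) \<in> P 1" "(q,r) \<in> P 1" using F1 assms by auto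
  have d: "p \<noteq> q" "q \<noteq> r" "p \<noteq> r"
    using a1 prof_notin[OF pP \<open>1 \<in> agents n\<close>] prof_trans[OF pP \<open>1 \<in> agents n\<close> a1] by auto
  note ag = three_agents[OF H d(1) d(3) d(2)]
  have "(p,r) \<in> P 3" using F1[OF assms(1) ag(3)] F1[OF assms(2) ag(3)] prof_trans[OF pP ag(3)] by blast
  then have "(r,p) \<notin> P 3" using prof_asym[OF pP ag(3)] by blast
  have L: "(p,q) \<in> P 1 \<and> (q,r) \<in> P 2" using F1 assms ag by blast
  have R1: "(p,q) \<notin> P' 1" "(q,r) \<notin> P' 2" using F1 assms ag prof_asym[OF pP'] by blast+
  show False using cyc_eq[OF ag(1,2,3) _ _ _ H d(1,3,2)] L R1 by simp
qed


lemma F4: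
  assumes pq: "(p,q) \<in> Fl" and r: "r \<in> H" "r \<noteq> p" "r \<noteq> q"
  shows "(p,r) \<in> Fl \<or> (r,q) \<in> Fl"
proof (rule ccontr)
  assume nc: "\<not> ((p,r) \<in> Fl \<or> (r,q) \<in> Fl)"
  have H: "p \<in> H" "q \<in> H" using pq Fl_sub by auto
  have n1: "(r,p) \<notin> Fl" using F3 pq by blast
  have n2: "(q,r) \<notin> Fl" using F3 pq by blast
  have "p \<noteq> q" using Fl_sub pq F1 prof_notin[OF pP]
    by (metis H(1) r(1) r(2) three_agents(1) nc F3 n1 n2) 
  note ag = three_agents[OF H r(1) this r(2)[symmetric] r(3)[symmetric]]
  have Apr: "(p,r) \<in> P x \<longleftrightarrow> (p,r) \<in> P' x" if "x \<in> agents n" for x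
    using F2[OF H(1) r(1) _ n1 that] nc by blast
  have Arp: "(r,p) \<in> P x \<longleftrightarrow> (r,p) \<in> P' x" if "x \<in> agents n" for x
    using F2[OF r(1) H(1) n1 _ that] nc by blast
  have Aqr: "(q,r) \<in> P x \<longleftrightarrow> (q,r) \<in> P' x" if "x \<in> agents n" for x
    using F2[OF H(2) r(1) n2 _ that] nc by blast
  have Arq: "(r,q) \<in> P x \<longleftrightarrow> (r,q) \<in> P' x" if "x \<in> agents n" for x
    using F2[OF r(1) H(2) _ n2 that] nc by blast
  have noM: "\<not> ((p,r) \<in> P x \<and> (r,q) \<in> P x)" if x: "x \<in> agents n" for x
  proof
    assume "(p,r) \<in> P x \<and> (r,q) \<in> P x"
    then have "(p,q) \<in> P' x" using Apr[OF x] Arq[OF x] prof_trans[OF pP' x] by blast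
    then show False using F1[OF pq x] prof_asym[OF pP' x] by blast
  qed
  have bot: "(q,r) \<in> P x" if x: "x \<in> agents n" "(r,p) \<notin> P x" for x
    using x noM[OF x(1)] prof_tot[OF pP x(1) H(1) r(1) r(2)[symmetric]]
      prof_tot[OF pP x(1) H(2) r(1) r(3)[symmetric]] by blast
  have contra: False if xyz: "x \<in> agents n" "y \<in> agents n" "z \<in> agents n"
    "x \<noteq> y" "x \<noteq> z" "y \<noteq> z" and T: "(r,p) \<in> P y \<longleftrightarrow> (r,p) \<in> P z" for x y z
  proof (cases "(r,p) \<in> P y")
    case True
    have "(r,q) \<in> P y" using True F1[OF pq xyz(2)] prof_trans[OF pP xyz(2)] by blast
    then have "(q,r) \<notin> P y" using prof_asym[OF pP xyz(2)] by blast
    moreover have "(p,q) \<in> P x" "(p,q) \<notin> P' x" using F1[OF pq xyz(1)] prof_asym[OF pP' xyz(1)] by blast+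
    ultimately show False using cyc_eq[OF xyz H(1,2) r(1) \<open>p \<noteq> q\<close> r(2)[symmetric] r(3)[symmetric]]
      True T Aqr[OF xyz(2)] by blast
  next
    case False
    have "(q,r) \<in> P y" using bot[OF xyz(2) False] .
    moreover have "(p,q) \<in> P x" "(p,q) \<notin> P' x" using F1[OF pq xyz(1)] prof_asym[OF pP' xyz(1)] by blast+
    ultimately show False using cyc_eq[OF xyz H(1,2) r(1) \<open>p \<noteq> q\<close> r(2)[symmetric] r(3)[symmetric]]
      False T Arp[OF xyz(3)] by blast
  qed
  show False
  proof (cases "(r,p) \<in> P 1 \<longleftrightarrow> (r,p) \<in> P 2")
    case True then show ?thesis using contra[of 3 1 2] ag by auto
  next
    case False
    show ?thesis
    proof (cases "(r,p) \<in> P 1 \<longleftrightarrow> (r,p) \<in> P 3")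
      case True then show ?thesis using contra[of 2 1 3] ag by auto
    next
      case False2: False
      then show ?thesis using False contra[of 1 2 3] ag by auto
    qed
  qed
qed


lemma all_less2: "(\<forall>i<(2::nat). Q i) \<longleftrightarrow> Q 0 \<and> Q 1"
  by (auto simp: numeral_2_eq_2 less_Suc_eq)

lemma all_less2': "(\<forall>i<Suc (Suc 0). Q i) \<longleftrightarrow> Q 0 \<and> Q 1"
  by (auto simp: less_Suc_eq)

lemma graph_to_rot:
  assumes n1: "n \<ge> 1"
  shows "rotation_equivalent n H P P'"
proof (cases "Fl = {}")
  case True
  have Hne: "H \<noteq> {}" using n1 cardH by auto
  have agree: "(p,q) \<in> P x \<longleftrightarrow> (p,q) \<in> P' x" if "p \<in> H" "q \<in> H" "x \<in> agents n" for p q x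
    using F2[OF that(1,2) _ _ that(3)] True by blast
  have d1: "decomposition n H P [H]" "decomposition n H P' [H]"
    unfolding decomposition_def using Hne by auto
  show ?thesis unfolding rotation_equivalent_def
    by (rule exI[of _ "[H]"]) (use d1 agree in auto)
next
  case False
  define A where "A = {p. \<exists>q. (p,q) \<in> Fl}"
  define B where "B = H - A"
  obtain p0 q0 where pq0: "(p0,q0) \<in> Fl" using False by auto
  have AH: "A \<subseteq> H" unfolding A_def using Fl_sub by blast
  have q0B: "q0 \<in> B" unfolding B_def A_def using pq0 Fl_sub F3 by blast
  have p0A: "p0 \<in> A" unfolding A_def using pq0 by blast
  have AB: "(p,q) \<in> Fl" if pA: "p \<in> A" and qB: "q \<in> B" for p q
  proof -
    obtain q1 where q1: "(p,q1) \<in> Fl" using pA unfolding A_def by blast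
    have "q \<noteq> p" using pA qB unfolding B_def by blast
    show ?thesis
    proof (cases "q = q1")
      case True then show ?thesis using q1 by simp
    next
      case False
      have "q \<in> H" using qB unfolding B_def by blast
      from F4[OF q1 this \<open>q \<noteq> p\<close> False] show ?thesis using qB unfolding B_def A_def by blast
    qed
  qed
  have inA: "(p,q) \<in> P x \<longleftrightarrow> (p,q) \<in> P' x" if "p \<in> A" "q \<in> A" "x \<in> agents n" for p q x
  proof -
    have "(p,q) \<notin> Fl" "(q,p) \<notin> Fl" using that(1,2) F3 unfolding A_def by blast+
    then show ?thesis using F2[OF _ _ _ _ that(3)] that AH by blast
  qed
  have inB: "(p,q) \<in> P x \<longleftrightarrow> (p,q) \<in> P' x" if "p \<in> B" "q \<in> B" "x \<in> agents n" for p q x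
  proof -
    have "(p,q) \<notin> Fl" "(q,p) \<notin> Fl" using that(1,2) unfolding A_def B_def by blast+
    then show ?thesis using F2[OF _ _ _ _ that(3)] that unfolding B_def by blast
  qed
  have dP: "decomposition n H P [A, B]"
    unfolding decomposition_def
  proof (intro conjI)
    show "\<forall>j<length [A, B]. [A, B] ! j \<noteq> {}" using p0A q0B by (auto simp: all_less2 all_less2')
    show "\<forall>i<length [A, B]. \<forall>j<length [A, B]. i \<noteq> j \<longrightarrow> [A, B] ! i \<inter> [A, B] ! j = {}"
      unfolding B_def by (auto simp: all_less2 all_less2')
    show "\<Union> (set [A, B]) = H" using AH unfolding B_def by auto
    show "\<forall>j l. j < l \<and> l < length [A, B] \<longrightarrow> (\<forall>p\<in>[A, B] ! j. \<forall>q\<in>[A, B] ! l. \<forall>x\<in>agents n. (p, q) \<in> P x)"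
    proof (intro allI impI)
    fix j l assume "j < l \<and> l < length [A, B]"
    then have "j = 0" "l = 1" by auto
    then show "\<forall>p\<in>[A, B] ! j. \<forall>q\<in>[A, B] ! l. \<forall>x\<in>agents n. (p, q) \<in> P x"
      using AB F1 by auto
  qed
  qed
  have dP': "decomposition n H P' (rotate 1 [A, B])"
    unfolding decomposition_def
  proof (intro conjI)
    show "\<forall>j<length (rotate 1 [A, B]). rotate 1 [A, B] ! j \<noteq> {}" using p0A q0B by (auto simp: all_less2 all_less2')
    show "\<forall>i<length (rotate 1 [A, B]). \<forall>j<length (rotate 1 [A, B]). i \<noteq> j \<longrightarrow> rotate 1 [A, B] ! i \<inter> rotate 1 [A, B] ! j = {}"
      unfolding B_def by (auto simp: all_less2 all_less2')
    show "\<Union> (set (rotate 1 [A, B])) = H" using AH unfolding B_def by auto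
    show "\<forall>j l. j < l \<and> l < length (rotate 1 [A, B]) \<longrightarrow> (\<forall>p\<in>rotate 1 [A, B] ! j. \<forall>q\<in>rotate 1 [A, B] ! l. \<forall>x\<in>agents n. (p, q) \<in> P' x)"
    proof (intro allI impI)
    fix j l assume "j < l \<and> l < length (rotate 1 [A, B])"
    then have "j = 0" "l = 1" by auto
    then show "\<forall>p\<in>rotate 1 [A, B] ! j. \<forall>q\<in>rotate 1 [A, B] ! l. \<forall>x\<in>agents n. (p, q) \<in> P' x"
      using AB F1 by auto
  qed
  qed
  show ?thesis unfolding rotation_equivalent_def
  proof (rule exI[of _ "[A, B]"], intro conjI)
    show "\<forall>j<length [A, B]. \<forall>p\<in>[A, B] ! j. \<forall>q\<in>[A, B] ! j. \<forall>x\<in>agents n. ((p, q) \<in> P x) = ((p, q) \<in> P' x)"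
      using inA inB by (auto simp: all_less2 all_less2')
    show "\<exists>r<length [A, B]. decomposition n H P' (rotate r [A, B])"
      using dP' by (intro exI[of _ 1]) simp
  qed (rule dP)
qed

end


theorem theorem3p1:
  fixes n :: nat and H :: "'h set" and P P' :: "nat \<Rightarrow> ('h \<times> 'h) set"
  assumes "n \<ge> 1" and "finite H" and "card H = n"
    and "is_profile n H P" and "is_profile n H P'"
  shows "majority_graph n H P = majority_graph n H P' \<longleftrightarrow> rotation_equivalent n H P P'"
proof
  assume g: "majority_graph n H P = majority_graph n H P'"
  have geq: "\<forall>\<mu>\<in>assignments n H. \<forall>\<nu>\<in>assignments n H.
        majority_pref n P \<mu> \<nu> \<longleftrightarrow> majority_pref n P' \<mu> \<nu>"
  proof (intro ballI)
    fix \<mu> \<nu> assume m: "\<mu> \<in> assignments n H" "\<nu> \<in> assignments n H"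
    have "snd (majority_graph n H P) = snd (majority_graph n H P')" using g by simp
    then have "(\<mu>, \<nu>) \<in> snd (majority_graph n H P) \<longleftrightarrow> (\<mu>, \<nu>) \<in> snd (majority_graph n H P')" by simp
    then show "majority_pref n P \<mu> \<nu> \<longleftrightarrow> majority_pref n P' \<mu> \<nu>"
      using m unfolding majority_graph_def by simp
  qed
  show "rotation_equivalent n H P P'"
    by (rule graph_to_rot[OF assms(2,3,4,5) geq assms(1)])
next
  assume "rotation_equivalent n H P P'"
  then show "majority_graph n H P = majority_graph n H P'"
    by (rule rot_to_cut[OF assms(4,5)])
qed

end
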